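(* Let $U=\mathbb{C}[[t]][t^{-1}]$ (formal Laurent series $a(t)$ in $t$), regarded as a differential commutative associative algebra with unit $1$ and derivation $\partial = d/dt$, and hence as a commutative vertex algebra with vacuum $1$, translation operator $\partial$, and $$Y(a(t),z)\,b(t)=(e^{z\partial}a(t))\,b(t)=i_{|z|<|t|}\,a(t+z)\,b(t),\qquad a(t),b(t)\in U,$$ where $i_{|z|<|t|}$ means expanding $a(t+z)$ in positive powers of $z/t$. Let $N=\mathbb{C}[\partial]\,n$ be a free $\mathbb{C}[\partial]$-module of rank $1$. Then there exists a unique vertex algebra structure on the $\mathbb{C}[\partial]$-module $V=U\oplus N$ (with translation operator $T=\partial$) such that $$Y(a(t),z)\,b(t)=i_{|z|<|t|}\,a(t+z)\,b(t),\qquad Y(n,z)\,n=0,\qquad Y(a(t),z)\,n=a(z)\,n$$ for all $a(t),b(t)\in U$. Moreover, the central series of the underlying Lie conformal algebra $V^{\mathrm{lie}}$ of $V$ (with $\lambda$-bracket $[a_\lambda b]=\sum_{n\ge 0}\frac{\lambda^n}{n!}a_{(n)}b$) stabilizes to $N$.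
   Context: Work over $\mathbb{C}$. A vertex algebra is a vector space with vacuum vector, infinitesimal translation operator $T$ and state-field correspondence $Y(a,z)=\sum_n a_{(n)}z^{-n-1}$ satisfying vacuum, translation invariance and locality axioms. The central series of a Lie conformal algebra $L$ is $L^{[0]}=L$, $L^{[k+1]}=[L,L^{[k]}]$, where $[A,B]$ is the $\mathbb{C}[\partial]$-submodule generated by all $a_{(j)}b$, $a\in A$, $b\in B$, $j\ge 0$; for finite (finitely generated over $\mathbb{C}[\partial]$) Lie conformal algebras it stabilizes to an ideal $L^{[\infty]}$. *)

theory Defs
  imports Complex_Main "HOL-Library.Product_Plus"
    "HOL-Computational_Algebra.Formal_Laurent_Series"
    "HOL-Computational_Algebra.Polynomial"
begin

text \<open>A vertex algebra on an additive group 'v with complex scalar multiplication sm,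
  vacuum vac, translation operator T, and n-th products Y n a b = a_(n) b
  (so Y(a,z) b = sum over n of a_(n) b z^(-n-1)).\<close>

definition vertex_algebra ::
  "(complex \<Rightarrow> 'v::ab_group_add \<Rightarrow> 'v) \<Rightarrow> 'v \<Rightarrow> ('v \<Rightarrow> 'v) \<Rightarrow> (int \<Rightarrow> 'v \<Rightarrow> 'v \<Rightarrow> 'v) \<Rightarrow> bool"
where
  "vertex_algebra sm vac T Y \<longleftrightarrow>
     \<comment> \<open>bilinearity of the products\<close>
     (\<forall>n a b c. Y n (a + b) c = Y n a c + Y n b c) \<and>
     (\<forall>n k a c. Y n (sm k a) c = sm k (Y n a c)) \<and>
     (\<forall>n a b c. Y n a (b + c) = Y n a b + Y n a c) \<and>
     (\<forall>n k a c. Y n a (sm k c) = sm k (Y n a c)) \<and>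
     \<comment> \<open>Y(a,z) is a field: a_(n) b = 0 for n large\<close>
     (\<forall>a b. \<exists>N. \<forall>n\<ge>N. Y n a b = 0) \<and>
     \<comment> \<open>vacuum axioms\<close>
     T vac = 0 \<and>
     (\<forall>n a. Y n vac a = (if n = -1 then a else 0)) \<and>
     (\<forall>n a. n \<ge> 0 \<longrightarrow> Y n a vac = 0) \<and>
     (\<forall>a. Y (-1) a vac = a) \<and>
     \<comment> \<open>translation invariance: [T, Y(a,z)] = d/dz Y(a,z)\<close>
     (\<forall>n a b. T (Y n a b) - Y n a (T b) = sm (- of_int n) (Y (n - 1) a b)) \<and>
     \<comment> \<open>locality: (z-w)^N [Y(a,z),Y(b,w)] = 0 for some N\<close>
     (\<forall>a b. \<exists>N::nat. \<forall>m n c.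
        (\<Sum>j\<in>{0..N}. sm ((-1) ^ j * of_nat (N choose j))
            (Y (m + int N - int j) a (Y (n + int j) b c)
             - Y (n + int j) b (Y (m + int N - int j) a c))) = 0)"

definition cd_span :: "(complex \<Rightarrow> 'v::ab_group_add \<Rightarrow> 'v) \<Rightarrow> ('v \<Rightarrow> 'v) \<Rightarrow> 'v set \<Rightarrow> 'v set"
where
  "cd_span sm T S = \<Inter>{M. S \<subseteq> M \<and> 0 \<in> M \<and> (\<forall>x\<in>M. \<forall>y\<in>M. x + y \<in> M)
       \<and> (\<forall>k. \<forall>x\<in>M. sm k x \<in> M) \<and> (\<forall>x\<in>M. T x \<in> M)}"

text \<open>[A,B] = C[d]-submodule generated by all a_(j) b, a in A, b in B, j \<ge> 0
  (the coefficients of the lambda-bracket).\<close>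
definition conf_bracket ::
  "(complex \<Rightarrow> 'v::ab_group_add \<Rightarrow> 'v) \<Rightarrow> ('v \<Rightarrow> 'v) \<Rightarrow> (int \<Rightarrow> 'v \<Rightarrow> 'v \<Rightarrow> 'v) \<Rightarrow> 'v set \<Rightarrow> 'v set \<Rightarrow> 'v set"
where
  "conf_bracket sm T Y A B = cd_span sm T {Y j a b | j a b. j \<ge> 0 \<and> a \<in> A \<and> b \<in> B}"

fun central_series ::
  "(complex \<Rightarrow> 'v::ab_group_add \<Rightarrow> 'v) \<Rightarrow> ('v \<Rightarrow> 'v) \<Rightarrow> (int \<Rightarrow> 'v \<Rightarrow> 'v \<Rightarrow> 'v) \<Rightarrow> nat \<Rightarrow> 'v set"
where
  "central_series sm T Y 0 = UNIV"
| "central_series sm T Y (Suc k) = conf_bracket sm T Y UNIV (central_series sm T Y k)"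

text \<open>U = C((t)) is complex fls; N = C[d] n is represented by polynomials:
  (0, p) stands for p(d) n.\<close>
type_synonym V = "complex fls \<times> complex poly"

definition V_smult :: "complex \<Rightarrow> V \<Rightarrow> V" where
  "V_smult c x = (fls_const c * fst x, smult c (snd x))"

definition V_T :: "V \<Rightarrow> V" where
  "V_T x = (fls_deriv (fst x), pCons 0 (snd x))"

definition V_vac :: V where "V_vac = (1, 0)"

definition V_n :: V where "V_n = (0, 1)"

text \<open>The n-th products on U given by Y(a(t),z) b(t) = (e^{z d} a(t)) b(t):
  a_(-k-1) b = (d^k a / k!) b and a_(n) b = 0 for n \<ge> 0.\<close>
definition U_prod :: "int \<Rightarrow> complex fls \<Rightarrow> complex fls \<Rightarrow> complex fls" where
  "U_prod n a b = (if n \<ge> 0 then 0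
     else fls_const (1 / of_nat (fact (nat (- n - 1)))) * (fls_deriv ^^ nat (- n - 1)) a * b)"

definition V_structure :: "(int \<Rightarrow> V \<Rightarrow> V \<Rightarrow> V) \<Rightarrow> bool" where
  "V_structure Y \<longleftrightarrow> vertex_algebra V_smult V_vac V_T Y
     \<and> (\<forall>n a b. Y n (a, 0) (b, 0) = (U_prod n a b, 0))
     \<and> (\<forall>n. Y n V_n V_n = 0)
     \<and> (\<forall>n a. Y n (a, 0) V_n = (0, [:fls_nth a (- n - 1):]))"

end

theory Submission
  imports Defs
begin


unbundle fps_syntax


definition Ssum :: "(complex \<Rightarrow> 'a \<Rightarrow> 'a) \<Rightarrow> nat \<Rightarrow> (int \<Rightarrow> int \<Rightarrow> 'a) \<Rightarrow> int \<Rightarrow> int \<Rightarrow> 'a::ab_group_add"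
  where "Ssum sc N K m n = (\<Sum>j\<in>{0..N}. sc ((-1) ^ j * of_nat (N choose j)) (K (m + int N - int j) (n + int j)))"

lemma Ssum_Suc:
  assumes add: "\<And>a b x. sc (a + b) x = sc a x + sc b x"
  shows "Ssum sc (Suc N) K m n = Ssum sc N K (m+1) n - Ssum sc N K m (n+1)"
proof -
  have neg: "sc (- a) x = - sc a x" for a x
  proof -
    have "sc a x + sc (-a) x = 0" using add[of a "-a" x] add[of 0 0 x] by simp
    then show ?thesis by (metis neg_eq_iff_add_eq_0)
  qed
  have z: "sc 0 x = 0" for x using add[of 0 0 x] by simp
  define f where "f j = K (m + int (Suc N) - int j) (n + int j)" for j
  have "Ssum sc (Suc N) K m n = (\<Sum>j\<in>{0..Suc N}. sc ((-1) ^ j * of_nat (Suc N choose j)) (f j))"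
    by (simp add: Ssum_def f_def)
  also have "\<dots> = sc 1 (f 0) + (\<Sum>j\<in>{0..N}. sc ((-1) ^ Suc j * of_nat (Suc N choose Suc j)) (f (Suc j)))"
    by (subst sum.atLeast0_atMost_Suc_shift) simp
  also have "\<dots> = sc 1 (f 0) + (\<Sum>j\<in>{0..N}. sc ((-1) ^ Suc j * of_nat (N choose Suc j)) (f (Suc j)))
      + (\<Sum>j\<in>{0..N}. sc ((-1) ^ Suc j * of_nat (N choose j)) (f (Suc j)))"
    unfolding sum.distrib[symmetric] add[symmetric] add.assoc
    by (intro arg_cong2[where f="(+)"] refl sum.cong) (simp_all add: algebra_simps)
  also have "sc 1 (f 0) + (\<Sum>j\<in>{0..N}. sc ((-1) ^ Suc j * of_nat (N choose Suc j)) (f (Suc j)))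
     = (\<Sum>j\<in>{0..Suc N}. sc ((-1) ^ j * of_nat (N choose j)) (f j))"
    by (simp only: sum.atLeast0_atMost_Suc_shift) (simp add: z binomial_eq_0)
  also have "\<dots> = Ssum sc N K (m+1) n"
    by (simp add: sum.atLeast0_atMost_Suc Ssum_def f_def algebra_simps z binomial_eq_0)
  also have "(\<Sum>j\<in>{0..N}. sc ((-1) ^ Suc j * of_nat (N choose j)) (f (Suc j))) = - Ssum sc N K m (n+1)"
    by (simp add: Ssum_def f_def neg sum_negf algebra_simps)
  finally show ?thesis by simp
qed

lemma Ssum_mono:
  assumes add: "\<And>a b x. sc (a + b) x = sc a x + sc b x"
    and "\<forall>m n. Ssum sc N K m n = 0" and "N \<le> N'"
  shows "\<forall>m n. Ssum sc N' K m n = 0"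
  using assms(3)
proof (induction N' rule: dec_induct)
  case base then show ?case using assms(2) by simp
next
  case (step k) then show ?case by (simp add: Ssum_Suc[OF add])
qed




lemma fd_add: "(fls_deriv ^^ r) (a + b) = (fls_deriv ^^ r) a + (fls_deriv ^^ r) b"
  by (induction r) auto

lemma fd_zero: "(fls_deriv ^^ r) 0 = 0"
  by (induction r) auto

lemma fd_cmult: "(fls_deriv ^^ r) (fls_const c * a) = fls_const c * (fls_deriv ^^ r) a"
  by (induction r) auto

lemma fd_one: "(fls_deriv ^^ Suc r) 1 = 0"
  by (induction r) auto

lemma fd_Suc: "(fls_deriv ^^ Suc r) a = (fls_deriv ^^ r) (fls_deriv a)"
  by (simp only: funpow_Suc_right comp_def)

definition regular :: "complex fls \<Rightarrow> bool" where
  "regular a \<longleftrightarrow> (\<forall>k<0. a $$ k = 0)"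

lemma regular_deriv: "regular a \<Longrightarrow> regular (fls_deriv a)"
  unfolding regular_def
proof (intro allI impI)
  fix k :: int assume r: "\<forall>k<0. a $$ k = 0" and k: "k < 0"
  show "fls_deriv a $$ k = 0"
  proof (cases "k = -1")
    case True then show ?thesis by simp
  next
    case False then have "k + 1 < 0" using k by simp
    then show ?thesis using r by simp
  qed
qed

lemma regular_fd: "regular a \<Longrightarrow> regular ((fls_deriv ^^ r) a)"
  by (induction r) (auto intro: regular_deriv)

lemma regular_cmult: "regular a \<Longrightarrow> regular (fls_const c * a)"
  by (simp add: regular_def)

lemma neg_int_cases:
  fixes n :: int
  assumes "n < 0"
  obtains r where "n = - int r - 1"
proof -
  have "n = - int (nat (-n-1)) - 1" using assms by simp
  then show ?thesis using that by blast
qed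

lemma U_prod_nonneg [simp]: "n \<ge> 0 \<Longrightarrow> U_prod n a b = 0"
  by (simp add: U_prod_def)

lemma U_prod_neg: "U_prod (- int r - 1) a b = fls_const (1 / fact r) * (fls_deriv ^^ r) a * b"
proof -
  have "nat (- (- int r - 1) - 1) = r" by simp
  then show ?thesis by (simp add: U_prod_def)
qed

lemma U_prod_cases:
  "U_prod n a b = (if n \<ge> 0 then 0 else fls_const (1 / fact (nat (-n-1))) * (fls_deriv ^^ nat (-n-1)) a * b)"
  by (simp add: U_prod_def)

lemma U_prod_add1: "U_prod n (a + a') b = U_prod n a b + U_prod n a' b"
  by (simp add: U_prod_def fd_add algebra_simps)

lemma U_prod_add2: "U_prod n a (b + b') = U_prod n a b + U_prod n a b'"
  by (simp add: U_prod_def algebra_simps)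

lemma U_prod_cmult1: "U_prod n (fls_const c * a) b = fls_const c * U_prod n a b"
  unfolding U_prod_def fd_cmult by (simp add: ac_simps)

lemma U_prod_cmult2: "U_prod n a (fls_const c * b) = fls_const c * U_prod n a b"
  by (simp add: U_prod_def algebra_simps)

lemma U_prod_zero1 [simp]: "U_prod n 0 b = 0"
  by (simp add: U_prod_def fd_zero)

lemma U_prod_zero2 [simp]: "U_prod n a 0 = 0"
  by (simp add: U_prod_def)

lemma U_prod_comm: "U_prod m u (U_prod n v w) = U_prod n v (U_prod m u w)"
  by (simp add: U_prod_def algebra_simps)

lemma fact_Suc_div: "of_nat (Suc r) * (1 / (fact (Suc r) :: complex)) = 1 / fact r"
proof -
  have h: "(fact (Suc r)::complex) = of_nat (Suc r) * fact r" by (simp only: fact_Suc)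
  have "of_nat (Suc r) \<noteq> (0::complex)" by (simp only: of_nat_eq_0_iff)
  then show ?thesis by (simp add: h del: of_nat_Suc)
qed

lemma U_prod_trans:
  "fls_deriv (U_prod n u v) - U_prod n u (fls_deriv v) = fls_const (- of_int n) * U_prod (n-1) u v"
proof (cases "n \<ge> 0")
  case True
  then show ?thesis by (cases "n = 0") auto
next
  case False
  then obtain r where n: "n = - int r - 1" using neg_int_cases by (metis not_le)
  have n1: "n - 1 = - int (Suc r) - 1" using n by simp
  have "fls_deriv (U_prod n u v) - U_prod n u (fls_deriv v)
      = fls_const (1 / fact r) * (fls_deriv ^^ Suc r) u * v"
    unfolding n U_prod_neg by (simp add: algebra_simps)
  also have "\<dots> = fls_const (of_nat (Suc r) * (1 / fact (Suc r))) * (fls_deriv ^^ Suc r) u * v"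
    by (simp only: fact_Suc_div)
  also have "\<dots> = fls_const (- of_int n) * U_prod (n-1) u v"
  proof -
    have "- of_int n = (of_nat (Suc r) :: complex)" using n by simp
    then show ?thesis unfolding n1 U_prod_neg
      by (simp only: fls_const_mult_const[symmetric] mult.assoc)
  qed
  finally show ?thesis .
qed




section \<open>U acting on N\<close>

lemma pCons0_add: "pCons 0 (p + q) = pCons 0 p + pCons 0 q"
  by simp

lemma pCons0_sum: "pCons 0 (\<Sum>x\<in>S. f x) = (\<Sum>x\<in>S. pCons 0 (f x))"
  by (induction S rule: infinite_finite_induct) (auto simp: pCons0_add)

lemma smult_sum_right: "smult c (\<Sum>x\<in>S. f x) = (\<Sum>x\<in>S. smult c (f x))"
  by (induction S rule: infinite_finite_induct) (auto simp: smult_add_right)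

lemma pCons0_diff: "pCons 0 (p - q) = pCons 0 p - pCons 0 q"
  by simp

primrec Aj :: "nat \<Rightarrow> int \<Rightarrow> complex fls \<Rightarrow> complex poly" where
  "Aj 0 m u = [:u $$ (-m-1):]"
| "Aj (Suc j) m u = pCons 0 (Aj j m u) + smult (of_int m) (Aj j (m-1) u)"

lemma Aj_add: "Aj j m (u + v) = Aj j m u + Aj j m v"
  by (induction j arbitrary: m) (simp_all add: algebra_simps smult_add_right)

lemma Aj_cmult: "Aj j m (fls_const c * u) = smult c (Aj j m u)"
  by (induction j arbitrary: m) (simp_all add: algebra_simps smult_add_right)

lemma Aj_zero [simp]: "Aj j m 0 = 0"
  by (induction j arbitrary: m) simp_all

lemma Aj_deriv: "Aj j m (fls_deriv u) = smult (- of_int m) (Aj j (m-1) u)"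
proof (induction j arbitrary: m)
  case 0
  have "-(m-1)-1 = -m" by simp
  then show ?case by simp
next
  case (Suc j)
  show ?case by (simp add: Suc algebra_simps smult_add_right)
qed

lemma Aj_one: "Aj j m 1 = (if m = -1 then monom 1 j else 0)"
proof (induction j arbitrary: m)
  case 0 then show ?case by (simp add: monom_0)
next
  case (Suc j) then show ?case by (simp add: monom_Suc)
qed

lemma Aj_vanish:
  assumes "\<forall>k\<ge>L. u $$ (-k-1) = 0"
  shows "m \<ge> L + int j \<Longrightarrow> Aj j m u = 0"
proof (induction j arbitrary: m)
  case 0 then show ?case using assms by simp
next
  case (Suc j)
  then have "Aj j m u = 0" "Aj j (m-1) u = 0" by simp_all
  then show ?case by simp
qed

definition ff :: "int \<Rightarrow> nat \<Rightarrow> complex" where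
  "ff m l = (\<Prod>t<l. of_int m - of_nat t)"

lemma ff_0 [simp]: "ff m 0 = 1"
  by (simp add: ff_def)

lemma ff_Suc: "ff m (Suc l) = of_int m * ff (m-1) l"
  unfolding ff_def by (subst prod.lessThan_Suc_shift) (simp add: algebra_simps)

lemma ff_Suc': "ff m (Suc l) = ff m l * (of_int m - of_nat l)"
  unfolding ff_def by simp

lemma ff_fact: "ff (int k) k = fact k"
  by (induction k) (simp_all add: ff_Suc)

lemma ff_m1: "ff (-1) l = (-1) ^ l * fact l"
  by (induction l) (simp_all add: ff_Suc' algebra_simps)

lemma Aj_coeff:
  "coeff (Aj j m u) i = (if i \<le> j then of_nat (j choose i) * ff m (j - i) * u $$ (int j - int i - m - 1) else 0)"
proof (induction j arbitrary: m i)
  case 0 then show ?case by (cases i) simp_all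
next
  case (Suc j)
  show ?case
  proof (cases i)
    case 0
    have "coeff (Aj (Suc j) m u) i = of_int m * coeff (Aj j (m-1) u) 0"
      using 0 by simp
    also have "\<dots> = of_int m * ff (m-1) j * u $$ (int j - m)"
      by (simp add: Suc)
    finally show ?thesis using 0 by (simp add: ff_Suc)
  next
    case (Suc i')
    have e: "coeff (Aj (Suc j) m u) i = coeff (Aj j m u) i' + of_int m * coeff (Aj j (m-1) u) (Suc i')"
      using Suc by simp
    show ?thesis
    proof (cases "i' \<le> j")
      case False
      then show ?thesis using e Suc by (simp add: Suc.IH)
    next
      case True
      show ?thesis
      proof (cases "i' = j")
        case True
        then show ?thesis using e Suc by (simp add: Suc.IH)
      next
        case False
        with \<open>i' \<le> j\<close> have lt: "Suc i' \<le> j" by simp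
        then obtain d where d: "j - i' = Suc d" "j - Suc i' = d"
          by (metis Suc_diff_le diff_Suc_Suc le_Suc_eq Suc_le_lessD Suc_diff_Suc)
        have idx: "int j - int (Suc i') - (m - 1) - 1 = int j - int i' - m - 1" by simp
        have "coeff (Aj (Suc j) m u) i = of_nat (j choose i') * ff m (Suc d) * u $$ (int j - int i' - m - 1)
             + of_nat (j choose Suc i') * (of_int m * ff (m-1) d) * u $$ (int j - int i' - m - 1)"
          using e lt \<open>i' \<le> j\<close> d by (simp add: Suc.IH idx algebra_simps)
        also have "\<dots> = of_nat (Suc j choose Suc i') * ff m (Suc d) * u $$ (int j - int i' - m - 1)"
          by (simp add: ff_Suc algebra_simps)
        finally show ?thesis using Suc \<open>i' \<le> j\<close> d by simp
      qed
    qed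
  qed
qed

definition A :: "int \<Rightarrow> complex fls \<Rightarrow> complex poly \<Rightarrow> complex poly" where
  "A m u q = (\<Sum>j\<le>degree q. smult (coeff q j) (Aj j m u))"

lemma A_bound:
  assumes "degree q \<le> M"
  shows "A m u q = (\<Sum>j\<le>M. smult (coeff q j) (Aj j m u))"
  unfolding A_def
  by (rule sum.mono_neutral_left) (use assms in \<open>auto simp: coeff_eq_0\<close>)

lemma A_addq: "A m u (p + q) = A m u p + A m u q"
proof -
  define M where "M = max (degree p) (degree q)"
  have "degree (p + q) \<le> M" "degree p \<le> M" "degree q \<le> M"
    by (auto simp: M_def degree_add_le)
  then show ?thesis
    by (simp add: A_bound[of _ M] smult_add_left sum.distrib)
qed

lemma A_smultq: "A m u (smult c q) = smult c (A m u q)"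
proof -
  have "degree (smult c q) \<le> degree q" by (simp add: degree_smult_le)
  then show ?thesis
    by (simp add: A_bound[of _ "degree q"] A_def smult_sum_right)
qed

lemma A_zeroq [simp]: "A m u 0 = 0"
  by (simp add: A_def)

lemma A_pCons:
  "A m u (pCons a q) = smult a [:u $$ (-m-1):] + pCons 0 (A m u q) + smult (of_int m) (A (m-1) u q)"
proof -
  have "degree (pCons a q) \<le> Suc (degree q)" by (rule degree_pCons_le)
  then have "A m u (pCons a q) = (\<Sum>j\<le>Suc (degree q). smult (coeff (pCons a q) j) (Aj j m u))"
    by (rule A_bound)
  also have "\<dots> = smult a [:u $$ (-m-1):] + (\<Sum>j\<le>degree q. smult (coeff q j) (Aj (Suc j) m u))"
    by (subst sum.atMost_Suc_shift) simp
  also have "\<dots> = smult a [:u $$ (-m-1):] + pCons 0 (A m u q) + smult (of_int m) (A (m-1) u q)"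
    by (simp add: A_def pCons0_sum smult_sum_right sum.distrib smult_add_right algebra_simps)
  finally show ?thesis .
qed

lemma A_pCons0: "A m u (pCons 0 q) = pCons 0 (A m u q) + smult (of_int m) (A (m-1) u q)"
  by (simp add: A_pCons)

lemma A_const: "A m u [:a:] = [:a * u $$ (-m-1):]"
  by (simp add: A_pCons)

lemma A_addu: "A m (u + v) q = A m u q + A m v q"
  by (simp add: A_def Aj_add smult_add_right sum.distrib)

lemma A_cmultu: "A m (fls_const c * u) q = smult c (A m u q)"
  unfolding A_def Aj_cmult by (simp add: smult_sum_right mult.commute)

lemma A_zerou [simp]: "A m 0 q = 0"
  by (simp add: A_def)

lemma A_derivu: "A m (fls_deriv u) q = smult (- of_int m) (A (m-1) u q)"
  by (simp add: A_def Aj_deriv smult_sum_right mult.commute)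

lemma A_one: "A m 1 q = (if m = -1 then q else 0)"
proof -
  have "(\<Sum>j\<le>degree q. smult (coeff q j) (monom 1 j)) = q"
    by (subst (2) poly_as_sum_of_monoms[symmetric]) (simp add: smult_monom)
  then show ?thesis by (simp add: A_def Aj_one)
qed

lemma A_vanish:
  assumes "\<forall>k\<ge>L. u $$ (-k-1) = 0" and "m \<ge> L + int (degree q)"
  shows "A m u q = 0"
  unfolding A_def
  by (rule sum.neutral) (use assms Aj_vanish[OF assms(1)] in auto)

lemma A_coeff: "degree q \<le> M \<Longrightarrow> coeff (A m u q) i = (\<Sum>j\<le>M. coeff q j * coeff (Aj j m u) i)"
  by (simp add: A_bound coeff_sum)

lemma A_comm: "A m u (A n v r) = A n v (A m u r)"
proof (induction r arbitrary: m n)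
  case 0 then show ?case by simp
next
  case (pCons a r)
  show ?case
    by (simp add: A_pCons A_addq A_smultq A_const pCons.IH smult_add_right algebra_simps)
qed




section \<open>N acting on U\<close>

definition sgn1 :: "int \<Rightarrow> complex" where
  "sgn1 e = (if even e then 1 else -1)"

lemma sgn1_minus1: "sgn1 (e - 1) = - sgn1 e"
  by (simp add: sgn1_def)

lemma sgn1_plus1: "sgn1 (e + 1) = - sgn1 e"
  by (simp add: sgn1_def)

lemma sgn1_0 [simp]: "sgn1 0 = 1"
  by (simp add: sgn1_def)

lemma sgn1_diff_nat: "sgn1 (e - int l) = (-1) ^ l * sgn1 e"
proof (induction l)
  case 0 then show ?case by simp
next
  case (Suc l)
  have "e - int (Suc l) = (e - int l) - 1" by simp
  then show ?case using Suc by (simp only: sgn1_minus1) simp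
qed

lemma sgn1_nonzero [simp]: "sgn1 e \<noteq> 0"
  by (simp add: sgn1_def)

definition Bn :: "int \<Rightarrow> complex fls \<Rightarrow> complex poly" where
  "Bn m v = (\<Sum>i<nat (-m - fls_subdegree v). monom (sgn1 (-m-1-int i) * v $$ (-m-1-int i) / fact i) i)"

lemma Bn_coeff: "coeff (Bn m v) i = sgn1 (-m-1-int i) * v $$ (-m-1-int i) / fact i"
proof -
  have "coeff (Bn m v) i = (\<Sum>i'<nat (-m - fls_subdegree v).
          if i' = i then sgn1 (-m-1-int i') * v $$ (-m-1-int i') / fact i' else 0)"
    by (simp add: Bn_def coeff_sum)
  also have "\<dots> = (if i < nat (-m - fls_subdegree v) then sgn1 (-m-1-int i) * v $$ (-m-1-int i) / fact i else 0)"
    by (simp add: sum.delta)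
  also have "\<dots> = sgn1 (-m-1-int i) * v $$ (-m-1-int i) / fact i"
  proof (cases "i < nat (-m - fls_subdegree v)")
    case False
    then have "-m-1-int i < fls_subdegree v" by simp
    then show ?thesis using False by simp
  qed simp
  finally show ?thesis .
qed

lemma Bn_add: "Bn m (v + w) = Bn m v + Bn m w"
  by (simp add: poly_eq_iff Bn_coeff add_divide_distrib distrib_left)

lemma Bn_cmult: "Bn m (fls_const c * v) = smult c (Bn m v)"
  by (simp add: poly_eq_iff Bn_coeff)

lemma Bn_zero [simp]: "Bn m 0 = 0"
  by (simp add: poly_eq_iff Bn_coeff)

lemma Bn_vanish: "m \<ge> - fls_subdegree v \<Longrightarrow> Bn m v = 0"
  by (simp add: Bn_def)

lemma Bn_one_nonneg: "m \<ge> 0 \<Longrightarrow> Bn m 1 = 0"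
  by (simp add: poly_eq_iff Bn_coeff)

lemma Bn_one_neg: "Bn (- int k - 1) 1 = monom (1 / fact k) k"
proof -
  have "\<And>i. - (- int k - 1) - 1 - int i = int k - int i" by simp
  then show ?thesis by (auto simp add: poly_eq_iff Bn_coeff)
qed

lemma Bn_trans: "pCons 0 (Bn m v) - Bn m (fls_deriv v) = smult (- of_int m) (Bn (m-1) v)"
proof (rule poly_eqI)
  fix i show "coeff (pCons 0 (Bn m v) - Bn m (fls_deriv v)) i = coeff (smult (- of_int m) (Bn (m-1) v)) i"
  proof (cases i)
    case 0
    have i1: "-m-1+1 = -m" "-(m-1)-1 = -m" by simp_all
    show ?thesis using 0
      by (simp add: Bn_coeff i1 sgn1_minus1[of "-m", simplified])
  next
    case (Suc i')
    define e where "e = -m-1-int i'"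
    have i1: "-m-1-int (Suc i') = e - 1" "-(m-1)-1-int (Suc i') = e" "e - 1 + 1 = e" "- m - int (Suc i') = e"
      by (simp_all add: e_def)
    have em: "of_int e = - of_int m - 1 - (of_nat i' :: complex)" by (simp add: e_def)
    have f: "(fact (Suc i') :: complex) = of_nat (Suc i') * fact i'" by (simp only: fact_Suc)
    have nz: "(of_nat (Suc i') :: complex) \<noteq> 0" "(fact i' :: complex) \<noteq> 0" by (simp_all only: of_nat_eq_0_iff fact_nonzero) simp
    have "coeff (pCons 0 (Bn m v) - Bn m (fls_deriv v)) i
        = sgn1 e * v $$ e / fact i' + sgn1 e * (of_int e * v $$ e) / (of_nat (Suc i') * fact i')"
      using Suc by (simp add: Bn_coeff i1 sgn1_minus1 e_def[symmetric] f del: of_nat_Suc)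
    also have "\<dots> = - of_int m * (sgn1 e * v $$ e / (of_nat (Suc i') * fact i'))"
      using nz unfolding em by (simp add: field_simps del: of_nat_Suc) (simp add: algebra_simps)
    also have "\<dots> = coeff (smult (- of_int m) (Bn (m-1) v)) i"
      using Suc by (simp add: Bn_coeff i1 f del: of_nat_Suc)
    finally show ?thesis .
  qed
qed

primrec Bj :: "nat \<Rightarrow> int \<Rightarrow> complex fls \<Rightarrow> complex poly" where
  "Bj 0 m v = Bn m v"
| "Bj (Suc j) m v = smult (- of_int m) (Bj j (m-1) v)"

lemma Bj_add: "Bj j m (v + w) = Bj j m v + Bj j m w"
  by (induction j arbitrary: m) (simp_all add: Bn_add smult_add_right)

lemma Bj_cmult: "Bj j m (fls_const c * v) = smult c (Bj j m v)"
  by (induction j arbitrary: m) (simp_all only: Bj.simps Bn_cmult smult_smult, simp add: mult.commute)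

lemma Bj_zero [simp]: "Bj j m 0 = 0"
  by (induction j arbitrary: m) simp_all

lemma Bj_vanish: "m \<ge> - fls_subdegree v + int j \<Longrightarrow> Bj j m v = 0"
  by (induction j arbitrary: m) (simp_all add: Bn_vanish)

lemma Bj_one_nonneg: "m \<ge> 0 \<Longrightarrow> Bj j m 1 = 0"
proof (induction j arbitrary: m)
  case 0 then show ?case by (simp add: Bn_one_nonneg)
next
  case (Suc j)
  show ?case
  proof (cases "m = 0")
    case False
    then have "m - 1 \<ge> 0" using Suc.prems by simp
    then show ?thesis by (simp add: Suc.IH)
  qed simp
qed

lemma Bj_one_neg: "Bj j (- int k - 1) 1 = monom (1 / fact k) (j + k)"
proof (induction j arbitrary: k)
  case 0 then show ?case by (simp add: Bn_one_neg)
next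
  case (Suc j)
  have e: "- int k - 1 - 1 = - int (Suc k) - 1" by simp
  have f: "(fact (Suc k) :: complex) = of_nat (Suc k) * fact k" by (simp only: fact_Suc)
  have nz: "(of_nat (Suc k) :: complex) \<noteq> 0" by (simp only: of_nat_eq_0_iff)
  have "- of_int (- int k - 1) = (of_nat (Suc k) :: complex)" by simp
  then show ?case using nz
    by (simp only: Bj.simps e Suc.IH smult_monom f) (simp add: field_simps del: of_nat_Suc)
qed

lemma Bj_trans: "pCons 0 (Bj j m v) - Bj j m (fls_deriv v) = smult (- of_int m) (Bj j (m-1) v)"
proof (induction j arbitrary: m)
  case 0 then show ?case by (simp add: Bn_trans)
next
  case (Suc j)
  have "pCons 0 (Bj (Suc j) m v) - Bj (Suc j) m (fls_deriv v)
      = smult (- of_int m) (pCons 0 (Bj j (m-1) v) - Bj j (m-1) (fls_deriv v))"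
    by (simp add: smult_diff_right)
  also have "\<dots> = smult (- of_int m) (smult (- of_int (m-1)) (Bj j (m-1-1) v))"
    by (simp only: Suc.IH)
  finally show ?case by simp
qed

definition B :: "int \<Rightarrow> complex poly \<Rightarrow> complex fls \<Rightarrow> complex poly" where
  "B m p v = (\<Sum>j\<le>degree p. smult (coeff p j) (Bj j m v))"

lemma B_bound:
  assumes "degree p \<le> M"
  shows "B m p v = (\<Sum>j\<le>M. smult (coeff p j) (Bj j m v))"
  unfolding B_def
  by (rule sum.mono_neutral_left) (use assms in \<open>auto simp: coeff_eq_0\<close>)

lemma B_addp: "B m (p + q) v = B m p v + B m q v"
proof -
  define M where "M = max (degree p) (degree q)"
  have "degree (p + q) \<le> M" "degree p \<le> M" "degree q \<le> M"
    by (auto simp: M_def degree_add_le)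
  then show ?thesis
    by (simp add: B_bound[of _ M] smult_add_left sum.distrib)
qed

lemma B_smultp: "B m (smult c p) v = smult c (B m p v)"
proof -
  have "degree (smult c p) \<le> degree p" by (simp add: degree_smult_le)
  then show ?thesis
    by (simp add: B_bound[of _ "degree p"] B_def smult_sum_right)
qed

lemma B_zerop [simp]: "B m 0 v = 0"
  by (simp add: B_def)

lemma B_pCons: "B n (pCons a q) v = smult a (Bn n v) + smult (- of_int n) (B (n-1) q v)"
proof -
  have "degree (pCons a q) \<le> Suc (degree q)" by (rule degree_pCons_le)
  then have "B n (pCons a q) v = (\<Sum>j\<le>Suc (degree q). smult (coeff (pCons a q) j) (Bj j n v))"
    by (rule B_bound)
  also have "\<dots> = smult a (Bn n v) + (\<Sum>j\<le>degree q. smult (coeff q j) (Bj (Suc j) n v))"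
    by (subst sum.atMost_Suc_shift) simp
  also have "\<dots> = smult a (Bn n v) + smult (- of_int n) (B (n-1) q v)"
    by (simp add: B_def smult_sum_right mult.commute)
  finally show ?thesis .
qed

lemma B_const: "B n [:a:] v = smult a (Bn n v)"
  by (simp add: B_pCons)

lemma B_one: "B n 1 v = Bn n v"
  using B_const[of n 1 v] by (simp add: one_pCons)

lemma B_addv: "B m p (v + w) = B m p v + B m p w"
  by (simp add: B_def Bj_add smult_add_right sum.distrib)

lemma B_cmultv: "B m p (fls_const c * v) = smult c (B m p v)"
  unfolding B_def Bj_cmult by (simp add: smult_sum_right mult.commute)

lemma B_zerov [simp]: "B m p 0 = 0"
  by (simp add: B_def)

lemma B_vanish: "m \<ge> - fls_subdegree v + int (degree p) \<Longrightarrow> B m p v = 0"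
  unfolding B_def by (rule sum.neutral) (auto intro!: Bj_vanish)

lemma B_trans: "pCons 0 (B n p v) - B n p (fls_deriv v) = smult (- of_int n) (B (n-1) p v)"
proof -
  have "pCons 0 (B n p v) - B n p (fls_deriv v)
      = (\<Sum>j\<le>degree p. smult (coeff p j) (pCons 0 (Bj j n v) - Bj j n (fls_deriv v)))"
    by (simp add: B_def pCons0_sum smult_diff_right sum_subtractf)
  also have "\<dots> = smult (- of_int n) (B (n-1) p v)"
    by (simp add: Bj_trans B_def smult_sum_right mult.commute)
  finally show ?thesis .
qed

lemma B_one_nonneg: "m \<ge> 0 \<Longrightarrow> B m p 1 = 0"
  by (simp add: B_def Bj_one_nonneg)

lemma B_m1_one: "B (-1) p 1 = p"
proof -
  have "Bj j (-1) 1 = monom 1 j" for j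
    using Bj_one_neg[of j 0] by simp
  then have "B (-1) p 1 = (\<Sum>j\<le>degree p. monom (coeff p j) j)"
    by (simp add: B_def smult_monom)
  then show ?thesis by (simp add: poly_as_sum_of_monoms)
qed




section \<open>The explicit structure\<close>

definition Y0 :: "int \<Rightarrow> V \<Rightarrow> V \<Rightarrow> V" where
  "Y0 m x y = (U_prod m (fst x) (fst y), A m (fst x) (snd y) + B m (snd x) (fst y))"

lemma U_prod_one1: "U_prod n 1 v = (if n = -1 then v else 0)"
proof (cases "n \<ge> 0")
  case False
  then obtain r where n: "n = - int r - 1" using neg_int_cases by (metis not_le)
  show ?thesis
  proof (cases r)
    case 0 then show ?thesis using n U_prod_neg[of 0 1 v] by simp
  next
    case (Suc r') then show ?thesis using n by (simp only: U_prod_neg fd_one) simp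
  qed
qed simp

lemma U_prod_one2: "U_prod (-1) u 1 = u"
  using U_prod_neg[of 0 u 1] by simp

lemma U_prod_derivu: "U_prod n (fls_deriv u) v = fls_const (- of_int n) * U_prod (n-1) u v"
proof (cases "n \<ge> 0")
  case True
  then show ?thesis by (cases "n = 0") auto
next
  case False
  then obtain r where n: "n = - int r - 1" using neg_int_cases by (metis not_le)
  have n1: "n - 1 = - int (Suc r) - 1" using n by simp
  have "U_prod n (fls_deriv u) v = fls_const (1 / fact r) * (fls_deriv ^^ Suc r) u * v"
    unfolding n U_prod_neg by (simp only: fd_Suc)
  also have "\<dots> = fls_const (of_nat (Suc r) * (1 / fact (Suc r))) * (fls_deriv ^^ Suc r) u * v"
    by (simp only: fact_Suc_div)
  also have "\<dots> = fls_const (- of_int n) * U_prod (n-1) u v"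
  proof -
    have "- of_int n = (of_nat (Suc r) :: complex)" using n by simp
    then show ?thesis unfolding n1 U_prod_neg
      by (simp only: fls_const_mult_const[symmetric] mult.assoc)
  qed
  finally show ?thesis .
qed

lemma V_smult_simps:
  "V_smult c (u, p) = (fls_const c * u, smult c p)"
  by (simp add: V_smult_def)

lemma Y0_simps: "Y0 m (u, p) (v, q) = (U_prod m u v, A m u q + B m p v)"
  by (simp add: Y0_def)

lemma Y0_field: "\<exists>N. \<forall>n\<ge>N. Y0 n a b = 0"
proof -
  obtain u p where a: "a = (u, p)" by fastforce
  obtain v q where b: "b = (v, q)" by fastforce
  define N where "N = max 0 (max (- fls_subdegree u + int (degree q)) (- fls_subdegree v + int (degree p)))"
  have hu: "\<forall>k\<ge>- fls_subdegree u. u $$ (-k-1) = 0" by simp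
  have "Y0 n a b = 0" if "n \<ge> N" for n
  proof -
    have "A n u q = 0" using that by (intro A_vanish[OF hu]) (simp add: N_def)
    moreover have "B n p v = 0" using that by (intro B_vanish) (simp add: N_def)
    moreover have "U_prod n u v = 0" using that by (simp add: N_def)
    ultimately show ?thesis by (simp add: a b Y0_simps zero_prod_def)
  qed
  then show ?thesis by blast
qed

lemma Y0_trans: "V_T (Y0 n a b) - Y0 n a (V_T b) = V_smult (- of_int n) (Y0 (n - 1) a b)"
proof -
  obtain u p where a: "a = (u, p)" by fastforce
  obtain v q where b: "b = (v, q)" by fastforce
  have 1: "fls_deriv (U_prod n u v) - U_prod n u (fls_deriv v) = fls_const (- of_int n) * U_prod (n-1) u v"
    by (rule U_prod_trans)
  have 2: "pCons 0 (A n u q + B n p v) - (A n u (pCons 0 q) + B n p (fls_deriv v))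
      = smult (- of_int n) (A (n-1) u q + B (n-1) p v)"
  proof -
    have "pCons 0 (A n u q + B n p v) - (A n u (pCons 0 q) + B n p (fls_deriv v))
       = (pCons 0 (B n p v) - B n p (fls_deriv v)) - smult (of_int n) (A (n-1) u q)"
      by (simp add: A_pCons0)
    also have "\<dots> = smult (- of_int n) (A (n-1) u q + B (n-1) p v)"
      by (simp add: B_trans smult_add_right)
    finally show ?thesis .
  qed
  show ?thesis using 1 2 by (simp add: a b Y0_simps V_T_def V_smult_simps)
qed

lemma Y0_U: "Y0 n (a, 0) (b, 0) = (U_prod n a b, 0)"
  by (simp add: Y0_simps)

lemma Y0_NN: "Y0 n V_n V_n = 0"
  by (simp add: V_n_def Y0_simps zero_prod_def B_one)

lemma Y0_UN: "Y0 n (a, 0) V_n = (0, [:a $$ (- n - 1):])"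
proof -
  have "A n a 1 = [:a $$ (- n - 1):]"
    using A_const[of n a 1] by (simp add: one_pCons)
  then show ?thesis by (simp add: V_n_def Y0_simps)
qed

lemma Y0_vac1: "Y0 n V_vac a = (if n = -1 then a else 0)"
proof -
  obtain v q where b: "a = (v, q)" by fastforce
  show ?thesis by (simp add: b V_vac_def Y0_simps U_prod_one1 A_one zero_prod_def)
qed

lemma Y0_vac2: "n \<ge> 0 \<Longrightarrow> Y0 n a V_vac = 0"
proof -
  assume n: "n \<ge> 0"
  obtain v q where b: "a = (v, q)" by fastforce
  show ?thesis using n by (simp add: b V_vac_def Y0_simps B_one_nonneg zero_prod_def)
qed

lemma Y0_vac3: "Y0 (-1) a V_vac = a"
proof -
  obtain v q where b: "a = (v, q)" by fastforce
  show ?thesis by (simp add: b V_vac_def Y0_simps B_m1_one U_prod_one2)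
qed

lemma Y0_add1: "Y0 n (a + b) c = Y0 n a c + Y0 n b c"
  by (simp add: Y0_def U_prod_add1 A_addu B_addp)

lemma Y0_add2: "Y0 n a (b + c) = Y0 n a b + Y0 n a c"
  by (simp add: Y0_def U_prod_add2 A_addq B_addv)

lemma Y0_smult1: "Y0 n (V_smult k a) c = V_smult k (Y0 n a c)"
  by (simp add: Y0_def V_smult_def U_prod_cmult1 A_cmultu B_smultp smult_add_right)

lemma Y0_smult2: "Y0 n a (V_smult k c) = V_smult k (Y0 n a c)"
  by (simp add: Y0_def V_smult_def U_prod_cmult2 A_smultq B_cmultv smult_add_right)

lemma V_T_vac: "V_T V_vac = 0"
  by (simp add: V_T_def V_vac_def zero_prod_def)




lemma Ssum_0: "Ssum sc 0 K m n = sc 1 (K m n)"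
  by (simp add: Ssum_def)

abbreviation Sp :: "nat \<Rightarrow> (int \<Rightarrow> int \<Rightarrow> complex poly) \<Rightarrow> int \<Rightarrow> int \<Rightarrow> complex poly" where
  "Sp \<equiv> Ssum smult"

lemma Sp_Suc: "Sp (Suc N) K m n = Sp N K (m+1) n - Sp N K m (n+1)"
  by (rule Ssum_Suc) (simp add: smult_add_left)

lemma Sp_add: "Sp N (\<lambda>m n. K1 m n + K2 m n) m n = Sp N K1 m n + Sp N K2 m n"
  by (simp add: Ssum_def smult_add_right sum.distrib)

lemma Sp_smult: "Sp N (\<lambda>m n. smult c (K m n)) m n = smult c (Sp N K m n)"
  by (simp add: Ssum_def smult_sum_right mult.commute)

lemma Sp_mono: "\<forall>m n. Sp N K m n = 0 \<Longrightarrow> N \<le> N' \<Longrightarrow> \<forall>m n. Sp N' K m n = 0"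
  by (rule Ssum_mono) (auto simp: smult_add_left)

lemma Sp_Dz: "Sp (Suc N) (\<lambda>m n. smult (- of_int m) (K (m-1) n)) m n
   = smult (- of_int m) (Sp (Suc N) K (m-1) n) - smult (of_nat (Suc N)) (Sp N K m n)"
proof (induction N arbitrary: m n)
  case 0
  show ?case by (simp add: Sp_Suc Ssum_0 poly_eq_iff) (simp add: algebra_simps)
next
  case (Suc N)
  show ?case
    apply (subst Sp_Suc)
    apply (simp only: Suc.IH)
    apply (simp add: Sp_Suc poly_eq_iff)
    apply (simp add: algebra_simps numeral_mult_conv_smult)
    done
qed

lemma Sp_Dw: "Sp (Suc N) (\<lambda>m n. smult (- of_int n) (K m (n-1))) m n
   = smult (- of_int n) (Sp (Suc N) K m (n-1)) + smult (of_nat (Suc N)) (Sp N K m n)"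
proof (induction N arbitrary: m n)
  case 0
  show ?case by (simp add: Sp_Suc Ssum_0 poly_eq_iff) (simp add: algebra_simps)
next
  case (Suc N)
  show ?case
    apply (subst Sp_Suc)
    apply (simp only: Suc.IH)
    apply (simp add: Sp_Suc poly_eq_iff)
    apply (simp add: algebra_simps numeral_mult_conv_smult)
    done
qed

definition locf :: "(complex fls \<Rightarrow> int \<Rightarrow> int \<Rightarrow> complex poly) \<Rightarrow> bool" where
  "locf KK \<longleftrightarrow> (\<exists>N. \<forall>w m n. Sp N (KK w) m n = 0)"

lemma locf_mono: "locf KK \<Longrightarrow> \<exists>N0. \<forall>N\<ge>N0. \<forall>w m n. Sp N (KK w) m n = 0"
  unfolding locf_def by (metis Sp_mono)

lemma locf_add: "locf K1 \<Longrightarrow> locf K2 \<Longrightarrow> locf (\<lambda>w m n. K1 w m n + K2 w m n)"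
proof -
  assume "locf K1" "locf K2"
  then obtain N1 N2 where "\<forall>N\<ge>N1. \<forall>w m n. Sp N (K1 w) m n = 0" "\<forall>N\<ge>N2. \<forall>w m n. Sp N (K2 w) m n = 0"
    using locf_mono by metis
  then have "\<forall>w m n. Sp (max N1 N2) (\<lambda>m n. K1 w m n + K2 w m n) m n = 0"
    by (simp add: Sp_add)
  then show ?thesis unfolding locf_def by blast
qed

lemma locf_smult: "locf K \<Longrightarrow> locf (\<lambda>w m n. smult c (K w m n))"
  unfolding locf_def by (auto simp: Sp_smult)

lemma locf_zero: "(\<And>w m n. K w m n = 0) \<Longrightarrow> locf K"
  unfolding locf_def by (rule exI[of _ 0]) (simp add: Ssum_0)

lemma locf_Dz: "locf K \<Longrightarrow> locf (\<lambda>w m n. smult (- of_int m) (K w (m-1) n))"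
proof -
  assume "locf K"
  then obtain N0 where h: "\<forall>N\<ge>N0. \<forall>w m n. Sp N (K w) m n = 0"
    using locf_mono by metis
  then have "\<forall>w m n. Sp (Suc N0) (\<lambda>m n. smult (- of_int m) (K w (m-1) n)) m n = 0"
    by (simp only: Sp_Dz) simp
  then show ?thesis unfolding locf_def by blast
qed

lemma locf_Dw: "locf K \<Longrightarrow> locf (\<lambda>w m n. smult (- of_int n) (K w m (n-1)))"
proof -
  assume "locf K"
  then obtain N0 where h: "\<forall>N\<ge>N0. \<forall>w m n. Sp N (K w) m n = 0"
    using locf_mono by metis
  then have "\<forall>w m n. Sp (Suc N0) (\<lambda>m n. smult (- of_int n) (K w m (n-1))) m n = 0"
    by (simp only: Sp_Dw) simp
  then show ?thesis unfolding locf_def by blast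
qed

lemma A_uminusq: "A m u (- p) = - A m u p"
proof -
  have "A m u p + A m u (-p) = 0" using A_addq[of m u p "- p"] by simp
  then show ?thesis by (metis neg_eq_iff_add_eq_0)
qed

lemma A_diffq: "A m u (p - q) = A m u p - A m u q"
  using A_addq[of m u p "- q"] by (simp add: A_uminusq)

lemma B_uminusv: "B m p (- v) = - B m p v"
proof -
  have "B m p v + B m p (-v) = 0" using B_addv[of m p v "- v"] by simp
  then show ?thesis by (metis neg_eq_iff_add_eq_0)
qed

lemma B_diffv: "B m p (v - w) = B m p v - B m p w"
  using B_addv[of m p v "- w"] by (simp add: B_uminusv)

definition Kc :: "complex fls \<Rightarrow> complex poly \<Rightarrow> complex fls \<Rightarrow> int \<Rightarrow> int \<Rightarrow> complex poly" where
  "Kc u q w m n = A m u (B n q w) - B n q (U_prod m u w)"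

lemma Kc_addu: "Kc (u1 + u2) q = (\<lambda>w m n. Kc u1 q w m n + Kc u2 q w m n)"
  by (intro ext) (simp add: Kc_def A_addu U_prod_add1 B_addv)

lemma Kc_cmultu: "Kc (fls_const c * u) q = (\<lambda>w m n. smult c (Kc u q w m n))"
  by (intro ext) (simp add: Kc_def A_cmultu U_prod_cmult1 B_cmultv smult_diff_right)

lemma Kc_derivu: "Kc (fls_deriv u) q = (\<lambda>w m n. smult (- of_int m) (Kc u q w (m-1) n))"
  by (intro ext) (simp add: Kc_def A_derivu U_prod_derivu B_cmultv B_uminusv smult_diff_right)

lemma Kc_pCons: "Kc u (pCons a q) = (\<lambda>w m n. smult a (Kc u 1 w m n) + smult (- of_int n) (Kc u q w m (n-1)))"
  by (intro ext) (simp add: Kc_def B_pCons A_addq A_diffq A_smultq B_one smult_diff_right)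

lemma Kc_zeroq: "Kc u 0 w m n = 0"
  by (simp add: Kc_def)

section \<open>Regular part\<close>

lemma Aj_reg: "regular b \<Longrightarrow> m \<ge> 0 \<Longrightarrow> Aj j m b = 0"
proof (induction j arbitrary: m)
  case 0 then show ?case by (simp add: regular_def)
next
  case (Suc j)
  show ?case
  proof (cases "m = 0")
    case True then show ?thesis using Suc by simp
  next
    case False then show ?thesis using Suc by simp
  qed
qed

lemma A_reg: "regular b \<Longrightarrow> m \<ge> 0 \<Longrightarrow> A m b p = 0"
  by (simp add: A_def Aj_reg)

lemma A_fd: "A (-1) ((fls_deriv ^^ r) b) p = smult (fact r) (A (- int r - 1) b p)"
proof (induction r arbitrary: b)
  case 0 then show ?case by simp
next
  case (Suc r)
  have e: "- int r - 1 - 1 = - int (Suc r) - 1" by simp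
  have c: "- of_int (- int r - 1) = (of_nat (Suc r) :: complex)" by simp
  have "A (-1) ((fls_deriv ^^ Suc r) b) p = smult (fact r) (A (- int r - 1) (fls_deriv b) p)"
    by (simp only: fd_Suc Suc.IH)
  also have "\<dots> = smult (fact (Suc r)) (A (- int (Suc r) - 1) b p)"
    by (simp only: A_derivu e c smult_smult fact_Suc mult.commute)
  finally show ?case .
qed

lemma A_neg_reduce: "A (- int r - 1) b p = A (-1) (fls_const (1 / fact r) * (fls_deriv ^^ r) b) p"
  by (simp add: A_cmultu A_fd)

lemma degree_Bn: "degree (Bn n w) \<le> nat (- n - fls_subdegree w)"
proof (rule degree_le, intro allI impI)
  fix i assume "nat (- n - fls_subdegree w) < i"
  then have "- n - 1 - int i < fls_subdegree w" by linarith
  then show "coeff (Bn n w) i = 0" by (simp add: Bn_coeff)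
qed

lemma prod_reg:
  assumes reg: "regular D" and hw: "\<forall>l>L. w $$ (e - int l) = 0"
  shows "(D * w) $$ e = (\<Sum>l\<le>L. D $$ (int l) * w $$ (e - int l))"
proof (cases "D = 0")
  case True then show ?thesis by simp
next
  case False
  define g where "g k = D $$ k * w $$ (e - k)" for k
  define I1 where "I1 = {fls_subdegree D..e - fls_subdegree w}"
  define I2 where "I2 = {0..int L}"
  have sd: "fls_subdegree D \<ge> 0" using reg False unfolding regular_def
    by (intro fls_subdegree_ge0I) auto
  have "(D * w) $$ e = sum g I1" by (simp add: fls_times_nth(2) g_def I1_def)
  also have "\<dots> = sum g (I1 \<union> I2)"
  proof (rule sum.mono_neutral_left)
    show "\<forall>i\<in>I1 \<union> I2 - I1. g i = 0"
    proof
      fix i assume "i \<in> I1 \<union> I2 - I1"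
      then have "i < fls_subdegree D \<or> i > e - fls_subdegree w" by (auto simp: I1_def)
      then show "g i = 0"
      proof
        assume "i < fls_subdegree D" then show ?thesis by (simp add: g_def)
      next
        assume "i > e - fls_subdegree w"
        then have "e - i < fls_subdegree w" by simp
        then show ?thesis by (simp add: g_def)
      qed
    qed
  qed (auto simp: I1_def I2_def)
  also have "\<dots> = sum g I2"
  proof (rule sum.mono_neutral_right)
    show "\<forall>i\<in>I1 \<union> I2 - I2. g i = 0"
    proof
      fix i assume i: "i \<in> I1 \<union> I2 - I2"
      then have "i \<ge> 0" using sd by (auto simp: I1_def)
      with i have "nat i > L" by (auto simp: I2_def)
      then have "w $$ (e - int (nat i)) = 0" using hw by blast
      then show "g i = 0" using \<open>i \<ge> 0\<close> by (simp add: g_def)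
    qed
  qed (auto simp: I1_def I2_def)
  also have "\<dots> = (\<Sum>l\<le>L. g (int l))"
  proof -
    have "I2 = int ` {0..L}" by (simp add: I2_def image_int_atLeastAtMost)
    then have "sum g I2 = sum (g \<circ> int) {0..L}" by (simp add: sum.reindex)
    then show ?thesis by (simp add: atLeast0AtMost)
  qed
  finally show ?thesis by (simp add: g_def)
qed

lemma reg_term:
  fixes i l :: nat and e :: int and x y :: complex
  shows "sgn1 (e - int l) * x / fact (l + i) * (of_nat ((l + i) choose i) * ff (-1) l * y)
       = sgn1 e / fact i * (y * x)"
proof -
  have b: "(of_nat ((l + i) choose i) :: complex) = fact (l + i) / (fact i * fact l)"
    using binomial_fact[of i "l + i"] by simp
  have s: "(-1::complex) ^ l * (-1) ^ l = 1"
    by (simp add: power_mult_distrib[symmetric])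
  show ?thesis
    unfolding b ff_m1 sgn1_diff_nat
    using s by (simp add: field_simps)
qed

lemma core_reg:
  assumes reg: "regular D"
  shows "A (-1) D (Bn n w) = Bn n (D * w)"
proof (rule poly_eqI)
  fix i
  define M0 where "M0 = nat (- n - fls_subdegree w)"
  define e where "e = - n - 1 - int i"
  define f where "f j = coeff (Bn n w) j * coeff (Aj j (-1) D) i" for j
  have deg: "degree (Bn n w) \<le> i + M0" using degree_Bn[of n w] by (simp add: M0_def)
  have "coeff (A (-1) D (Bn n w)) i = (\<Sum>j\<le>i + M0. f j)"
    by (simp add: A_coeff[OF deg] f_def)
  also have "\<dots> = (\<Sum>j\<in>{i..i + M0}. f j)"
    by (rule sum.mono_neutral_right) (auto simp: f_def Aj_coeff)
  also have "\<dots> = (\<Sum>l\<in>{0..M0}. f (l + i))"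
    using sum.shift_bounds_cl_nat_ivl[of f 0 i M0] by (simp add: add.commute)
  also have "\<dots> = (\<Sum>l\<in>{0..M0}. sgn1 e / fact i * (D $$ (int l) * w $$ (e - int l)))"
  proof (rule sum.cong[OF refl])
    fix l assume "l \<in> {0..M0}"
    have i1: "- n - 1 - int (l + i) = e - int l" by (simp add: e_def)
    have i2: "int (l + i) - int i - (-1) - 1 = int l" by simp
    have c1: "coeff (Bn n w) (l + i) = sgn1 (e - int l) * w $$ (e - int l) / fact (l + i)"
      by (simp only: Bn_coeff i1)
    have c2: "coeff (Aj (l + i) (-1) D) i = of_nat ((l + i) choose i) * ff (-1) l * D $$ (int l)"
      by (simp add: Aj_coeff)
    show "f (l + i) = sgn1 e / fact i * (D $$ (int l) * w $$ (e - int l))"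
      by (simp only: f_def c1 c2) (rule reg_term)
  qed
  also have "\<dots> = sgn1 e / fact i * (D * w) $$ e"
  proof -
    have hw: "\<forall>l>M0. w $$ (e - int l) = 0"
    proof (intro allI impI)
      fix l assume "M0 < l"
      then have "e - int l < fls_subdegree w" unfolding M0_def e_def by linarith
      then show "w $$ (e - int l) = 0" by simp
    qed
    show ?thesis using prod_reg[OF reg hw]
      by (simp add: sum_distrib_left atLeast0AtMost)
  qed
  also have "\<dots> = coeff (Bn n (D * w)) i"
    by (simp add: Bn_coeff e_def)
  finally show "coeff (A (-1) D (Bn n w)) i = coeff (Bn n (D * w)) i" .
qed

lemma Kc_reg: "regular b \<Longrightarrow> Kc b 1 w m n = 0"
proof (cases "m \<ge> 0")
  case True
  assume "regular b"
  then show ?thesis using True by (simp add: Kc_def A_reg)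
next
  case False
  assume reg: "regular b"
  then obtain r where m: "m = - int r - 1" using False neg_int_cases by (metis not_le)
  define D where "D = fls_const (1 / fact r) * (fls_deriv ^^ r) b"
  have rD: "regular D" unfolding D_def by (intro regular_cmult regular_fd reg)
  have "U_prod m b w = D * w" by (simp add: m U_prod_neg D_def)
  moreover have "A m b (Bn n w) = A (-1) D (Bn n w)" by (simp add: m A_neg_reduce D_def)
  ultimately show ?thesis by (simp add: Kc_def B_one core_reg[OF rD])
qed




section \<open>The principal part\<close>

lemma fd_Xinv_nth:
  "((fls_deriv ^^ r) fls_X_inv) $$ k = (if k = -1 - int r then (-1) ^ r * fact r else (0::complex))"
proof (induction r arbitrary: k)
  case 0 then show ?case by simp
next
  case (Suc r)
  have "((fls_deriv ^^ Suc r) (fls_X_inv :: complex fls)) $$ k = of_int (k + 1) * ((fls_deriv ^^ r) fls_X_inv) $$ (k + 1)"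
    by simp
  also have "\<dots> = (if k = -1 - int (Suc r) then (-1) ^ Suc r * fact (Suc r) else 0)"
  proof (cases "k = -1 - int (Suc r)")
    case True
    then have k1: "k + 1 = -1 - int r" "of_int (k + 1) = - (of_nat (Suc r) :: complex)" by simp_all
    have hX: "((fls_deriv ^^ r) fls_X_inv) $$ (k + 1) = (-1) ^ r * (fact r :: complex)"
      using Suc.IH[of "k + 1"] unfolding k1(1) by simp
    have "of_int (k + 1) * ((fls_deriv ^^ r) fls_X_inv) $$ (k + 1) = - (of_nat (Suc r)) * ((-1) ^ r * (fact r :: complex))"
      by (simp only: hX k1(2))
    also have "\<dots> = (-1) ^ Suc r * fact (Suc r)"
      by (simp only: fact_Suc power_Suc) (simp add: algebra_simps)
    finally show ?thesis using True by simp
  next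
    case False
    then have "k + 1 \<noteq> -1 - int r" by simp
    then show ?thesis using False by (simp add: Suc.IH)
  qed
  finally show ?case .
qed

lemma single_mult:
  assumes G: "\<forall>k. G $$ k = (if k = s then a else (0::complex))"
  shows "(G * w) $$ e = a * w $$ (e - s)"
proof (cases "a = 0")
  case True
  then have "G = 0" using G by (intro fls_zero_eqI) simp
  then show ?thesis using True by simp
next
  case False
  have sd: "fls_subdegree G = s"
    by (rule fls_subdegree_eqI) (use G False in auto)
  have "(G * w) $$ e = (\<Sum>i\<in>{s..e - fls_subdegree w}. G $$ i * w $$ (e - i))"
    using fls_times_nth(2)[of G w e] sd by simp
  also have "\<dots> = (\<Sum>i\<in>{s..e - fls_subdegree w}. if i = s then a * w $$ (e - s) else 0)"
    by (rule sum.cong) (auto simp: G)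
  also have "\<dots> = a * w $$ (e - s)"
  proof (cases "s \<le> e - fls_subdegree w")
    case True then show ?thesis by (simp add: sum.delta)
  next
    case False
    then have "e - s < fls_subdegree w" by simp
    then show ?thesis using False by (simp add: sum.delta)
  qed
  finally show ?thesis .
qed

lemma Aj_Xinv_neg: "m < 0 \<Longrightarrow> Aj j m fls_X_inv = 0"
  by (rule poly_eqI) (auto simp: Aj_coeff)

lemma A_Xinv_coeff:
  "coeff (A (int k) fls_X_inv p) i = coeff p (i + k) * (of_nat ((i + k) choose i) * fact k)"
proof -
  define M where "M = degree p + i + k"
  have deg: "degree p \<le> M" by (simp add: M_def)
  have "coeff (A (int k) fls_X_inv p) i = (\<Sum>j\<le>M. coeff p j * coeff (Aj j (int k) fls_X_inv) i)"
    by (rule A_coeff[OF deg])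
  also have "\<dots> = (\<Sum>j\<le>M. if j = i + k then coeff p (i + k) * (of_nat ((i + k) choose i) * fact k) else 0)"
  proof (rule sum.cong[OF refl])
    fix j
    show "coeff p j * coeff (Aj j (int k) fls_X_inv) i
        = (if j = i + k then coeff p (i + k) * (of_nat ((i + k) choose i) * fact k) else 0)"
    proof (cases "j = i + k")
      case True
      then show ?thesis by (simp add: Aj_coeff ff_fact)
    next
      case False
      then have "i \<le> j \<Longrightarrow> int j - int i - int k - 1 \<noteq> -1" by simp
      then show ?thesis using False by (simp add: Aj_coeff)
    qed
  qed
  also have "\<dots> = coeff p (i + k) * (of_nat ((i + k) choose i) * fact k)"
    by (simp add: sum.delta M_def)
  finally show ?thesis .
qed

lemma Kc_Xinv: "Kc fls_X_inv 1 w m n = Bn (n + m) w"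
proof (cases "m \<ge> 0")
  case True
  then obtain k where m: "m = int k" using nonneg_int_cases by metis
  have "A (int k) fls_X_inv (Bn n w) = Bn (n + int k) w"
  proof (rule poly_eqI)
    fix i
    have idx: "- n - 1 - int (i + k) = - (n + int k) - 1 - int i" by simp
    have b: "(of_nat ((i + k) choose i) :: complex) = fact (i + k) / (fact i * fact k)"
      using binomial_fact[of i "i + k"] by simp
    show "coeff (A (int k) fls_X_inv (Bn n w)) i = coeff (Bn (n + int k) w) i"
      unfolding A_Xinv_coeff Bn_coeff idx b by (simp add: field_simps)
  qed
  then show ?thesis using True m by (simp add: Kc_def B_one)
next
  case False
  then obtain r where m: "m = - int r - 1" using neg_int_cases by (metis not_le)
  define G where "G = (fls_deriv ^^ r) (fls_X_inv :: complex fls)"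
  have Gn: "\<forall>k. G $$ k = (if k = -1 - int r then (-1) ^ r * fact r else 0)"
    by (simp add: G_def fd_Xinv_nth)
  have A0: "A m fls_X_inv p = 0" for p
    using False by (simp add: A_def Aj_Xinv_neg)
  have U: "U_prod m fls_X_inv w $$ e = (-1) ^ r * w $$ (e - (-1 - int r))" for e
  proof -
    have "U_prod m fls_X_inv w $$ e = (1 / fact r) * (G * w) $$ e"
      by (simp add: m U_prod_neg G_def mult.assoc)
    also have "\<dots> = (-1) ^ r * w $$ (e - (-1 - int r))"
      by (simp add: single_mult[OF Gn])
    finally show ?thesis .
  qed
  have "Bn n (U_prod m fls_X_inv w) = - Bn (n + m) w"
  proof (rule poly_eqI)
    fix i
    define e' where "e' = - (n + m) - 1 - int i"
    have idx: "- n - 1 - int i - (-1 - int r) = e'" by (simp add: e'_def m)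
    have sg: "sgn1 (- n - 1 - int i) = (-1) ^ Suc r * sgn1 e'"
    proof -
      have "- n - 1 - int i = e' - int (Suc r)" by (simp add: e'_def m)
      then show ?thesis by (simp only: sgn1_diff_nat)
    qed
    have s: "(-1::complex) ^ r * (-1) ^ r = 1"
      by (simp add: power_mult_distrib[symmetric])
    show "coeff (Bn n (U_prod m fls_X_inv w)) i = coeff (- Bn (n + m) w) i"
      unfolding coeff_minus Bn_coeff U idx sg e'_def[symmetric] using s
      by (simp add: algebra_simps)
  qed
  then show ?thesis by (simp add: Kc_def B_one A0)
qed

lemma locf_Xinv: "locf (Kc fls_X_inv 1)"
  unfolding locf_def
proof (intro exI[of _ 1] allI)
  fix w and m n :: int
  have "n + (m + 1) = n + 1 + m" by (simp add: algebra_simps)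
  then show "Sp 1 (Kc fls_X_inv 1 w) m n = 0"
    using Sp_Suc[of 0 "Kc fls_X_inv 1 w" m n] by (simp add: Ssum_0 Kc_Xinv ac_simps)
qed

lemma locf_g: "locf (Kc ((fls_deriv ^^ r) fls_X_inv) 1)"
proof (induction r)
  case 0 then show ?case by (simp add: locf_Xinv)
next
  case (Suc r)
  have e: "(fls_deriv ^^ Suc r) fls_X_inv = fls_deriv ((fls_deriv ^^ r) (fls_X_inv :: complex fls))" by simp
  show ?case unfolding e Kc_derivu by (rule locf_Dz[OF Suc.IH])
qed

lemma locf_u1: "locf (Kc u 1)"
proof -
  have main: "\<forall>u. (\<forall>i < - int k. u $$ i = 0) \<longrightarrow> locf (Kc u 1)" for k
  proof (induction k)
    case 0
    show ?case
    proof (intro allI impI)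
      fix u :: "complex fls" assume "\<forall>i < - int 0. u $$ i = 0"
      then have "regular u" by (simp add: regular_def)
      then show "locf (Kc u 1)" by (intro locf_zero) (rule Kc_reg)
    qed
  next
    case (Suc k)
    show ?case
    proof (intro allI impI)
      fix u :: "complex fls" assume h: "\<forall>i < - int (Suc k). u $$ i = 0"
      define G where "G = (fls_deriv ^^ k) (fls_X_inv :: complex fls)"
      define s where "s = -1 - int k"
      define c where "c = u $$ s / ((-1) ^ k * fact k)"
      define u' where "u' = u - fls_const c * G"
      have Gn: "G $$ i = (if i = s then (-1) ^ k * fact k else 0)" for i
        by (simp add: G_def s_def fd_Xinv_nth)
      have nz: "(-1::complex) ^ k * fact k \<noteq> 0" by simp
      have "\<forall>i < - int k. u' $$ i = 0"
      proof (intro allI impI)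
        fix i :: int assume i: "i < - int k"
        show "u' $$ i = 0"
        proof (cases "i = s")
          case True
          then show ?thesis using nz by (simp add: u'_def Gn c_def)
        next
          case False
          then have "i < - int (Suc k)" using i by (simp add: s_def)
          then show ?thesis using h False by (simp add: u'_def Gn)
        qed
      qed
      then have l1: "locf (Kc u' 1)" using Suc.IH by blast
      have l2: "locf (Kc (fls_const c * G) 1)"
        unfolding Kc_cmultu G_def by (intro locf_smult locf_g)
      have "u = u' + fls_const c * G" by (simp add: u'_def)
      then have "Kc u 1 = (\<lambda>w m n. Kc u' 1 w m n + Kc (fls_const c * G) 1 w m n)"
        by (simp add: Kc_addu)
      then show "locf (Kc u 1)" using locf_add[OF l1 l2] by simp
    qed
  qed
  have "\<forall>i < - int (nat (- fls_subdegree u)). u $$ i = 0"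
  proof (intro allI impI)
    fix i assume "i < - int (nat (- fls_subdegree u))"
    then have "i < fls_subdegree u" by linarith
    then show "u $$ i = 0" by simp
  qed
  then show ?thesis using main by blast
qed

lemma locf_uq: "locf (Kc u q)"
proof (induction q)
  case 0
  show ?case by (intro locf_zero) (simp add: Kc_zeroq)
next
  case (pCons a q)
  show ?case unfolding Kc_pCons
    by (intro locf_add locf_smult locf_u1 locf_Dw pCons.IH)
qed

lemma Y0_comm:
  "Y0 M (u, p) (Y0 M' (v, q) (w, r)) - Y0 M' (v, q) (Y0 M (u, p) (w, r))
   = (0, Kc u q w M M' - Kc v p w M' M)"
  by (simp add: Y0_def Kc_def U_prod_comm A_addq A_comm algebra_simps)

lemma refl_sum:
  "(\<Sum>j\<in>{0..N}. smult ((-1) ^ j * of_nat (N choose j)) (K (n + int j) (m + int N - int j)))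
   = smult ((-1) ^ N) (Sp N K n m)"
proof -
  have s: "(-1::complex) ^ N * (-1) ^ N = 1"
    by (simp add: power_mult_distrib[symmetric])
  have "Sp N K n m = (\<Sum>j\<in>{0..N}. smult ((-1) ^ j * of_nat (N choose j)) (K (n + int N - int j) (m + int j)))"
    by (simp add: Ssum_def)
  also have "\<dots> = (\<Sum>j\<in>{0..N}. smult ((-1) ^ (N - j) * of_nat (N choose (N - j))) (K (n + int N - int (N - j)) (m + int (N - j))))"
    by (subst sum.atLeastAtMost_rev) simp
  also have "\<dots> = (\<Sum>j\<in>{0..N}. smult ((-1) ^ N) (smult ((-1) ^ j * of_nat (N choose j)) (K (n + int j) (m + int N - int j))))"
  proof (rule sum.cong[OF refl])
    fix j assume j: "j \<in> {0..N}"
    then have jN: "j \<le> N" by simp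
    have p: "(-1::complex) ^ (N - j) = (-1) ^ N * (-1) ^ j"
    proof -
      have "(-1::complex) ^ N = (-1) ^ (N - j) * (-1) ^ j"
        using jN by (simp add: power_add[symmetric])
      moreover have "(-1::complex) ^ j * (-1) ^ j = 1"
        by (simp add: power_mult_distrib[symmetric])
      ultimately show ?thesis by (metis mult.assoc mult.right_neutral)
    qed
    have c: "N choose (N - j) = N choose j" using binomial_symmetric[OF jN] by simp
    have i: "n + int N - int (N - j) = n + int j" "m + int (N - j) = m + int N - int j"
      using jN by simp_all
    show "smult ((-1) ^ (N - j) * of_nat (N choose (N - j))) (K (n + int N - int (N - j)) (m + int (N - j)))
        = smult ((-1) ^ N) (smult ((-1) ^ j * of_nat (N choose j)) (K (n + int j) (m + int N - int j)))"
      by (simp only: p c i smult_smult mult.assoc)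
  qed
  also have "\<dots> = smult ((-1) ^ N) (\<Sum>j\<in>{0..N}. smult ((-1) ^ j * of_nat (N choose j)) (K (n + int j) (m + int N - int j)))"
    by (simp add: smult_sum_right)
  finally have "smult ((-1) ^ N) (Sp N K n m) = smult ((-1) ^ N * (-1) ^ N) (\<Sum>j\<in>{0..N}. smult ((-1) ^ j * of_nat (N choose j)) (K (n + int j) (m + int N - int j)))"
    by simp
  then show ?thesis using s by simp
qed

lemma Y0_loc:
  "\<exists>N::nat. \<forall>m n c. (\<Sum>j\<in>{0..N}. V_smult ((-1) ^ j * of_nat (N choose j))
            (Y0 (m + int N - int j) a (Y0 (n + int j) b c)
             - Y0 (n + int j) b (Y0 (m + int N - int j) a c))) = 0"
proof -
  obtain u p where a: "a = (u, p)" by fastforce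
  obtain v q where b: "b = (v, q)" by fastforce
  obtain N1 where N1: "\<forall>N\<ge>N1. \<forall>w m n. Sp N (Kc u q w) m n = 0"
    using locf_mono[OF locf_uq] by blast
  obtain N2 where N2: "\<forall>N\<ge>N2. \<forall>w m n. Sp N (Kc v p w) m n = 0"
    using locf_mono[OF locf_uq] by blast
  define N where "N = max N1 N2"
  have h1: "\<forall>w m n. Sp N (Kc u q w) m n = 0" and h2: "\<forall>w m n. Sp N (Kc v p w) m n = 0"
    using N1 N2 by (simp_all add: N_def)
  have "(\<Sum>j\<in>{0..N}. V_smult ((-1) ^ j * of_nat (N choose j))
            (Y0 (m + int N - int j) a (Y0 (n + int j) b c)
             - Y0 (n + int j) b (Y0 (m + int N - int j) a c))) = 0" for m n c
  proof -
    obtain w r where c: "c = (w, r)" by fastforce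
    have "(\<Sum>j\<in>{0..N}. V_smult ((-1) ^ j * of_nat (N choose j))
            (Y0 (m + int N - int j) a (Y0 (n + int j) b c)
             - Y0 (n + int j) b (Y0 (m + int N - int j) a c)))
        = (\<Sum>j\<in>{0..N}. (0, smult ((-1) ^ j * of_nat (N choose j))
            (Kc u q w (m + int N - int j) (n + int j) - Kc v p w (n + int j) (m + int N - int j))))"
      by (simp add: a b c Y0_comm V_smult_simps)
    also have "\<dots> = (0, Sp N (Kc u q w) m n - (\<Sum>j\<in>{0..N}. smult ((-1) ^ j * of_nat (N choose j))
            (Kc v p w (n + int j) (m + int N - int j))))"
      by (simp add: sum_prod smult_diff_right sum_subtractf Ssum_def)
    also have "\<dots> = (0, Sp N (Kc u q w) m n - smult ((-1) ^ N) (Sp N (Kc v p w) n m))"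
      by (simp only: refl_sum)
    also have "\<dots> = 0" using h1 h2 by (simp add: zero_prod_def)
    finally show ?thesis .
  qed
  then show ?thesis by blast
qed

theorem Y0_VA: "vertex_algebra V_smult V_vac V_T Y0"
  unfolding vertex_algebra_def
  using Y0_add1 Y0_add2 Y0_smult1 Y0_smult2 Y0_field V_T_vac Y0_vac1 Y0_vac2 Y0_vac3
      Y0_trans Y0_loc by blast

theorem Y0_structure: "V_structure Y0"
  unfolding V_structure_def
  by (simp add: Y0_VA Y0_U Y0_NN Y0_UN)




lemma V_smult_add_left: "V_smult (a + b) x = V_smult a x + V_smult b x"
  by (simp add: V_smult_def distrib_right smult_add_left fls_plus_const[symmetric])

lemma V_smult_one [simp]: "V_smult 1 x = x"
  by (simp add: V_smult_def)

lemma V_smult_mult: "V_smult a (V_smult b x) = V_smult (a * b) x"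
  by (simp add: V_smult_def mult.assoc[symmetric] fls_const_mult_const)

lemma V_smult_zero [simp]: "V_smult c 0 = 0"
  by (simp add: V_smult_def zero_prod_def)

lemma V_smult_diff: "V_smult c (x - y) = V_smult c x - V_smult c y"
  by (simp add: V_smult_def algebra_simps smult_diff_right)

lemma V_T_smult: "V_T (V_smult c x) = V_smult c (V_T x)"
  by (simp add: V_T_def V_smult_def)

lemma V_n_split: "(0, pCons c q) = V_smult c V_n + V_T (0, q)"
  by (simp add: V_smult_def V_n_def V_T_def)

lemma fst_VT_pow: "fst ((V_T ^^ k) (0, p)) = 0"
  by (induction k) (simp_all add: V_T_def)

context
  fixes Y :: "int \<Rightarrow> V \<Rightarrow> V \<Rightarrow> V"
  assumes va: "vertex_algebra V_smult V_vac V_T Y"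
begin

lemma va_add1: "Y n (a + b) c = Y n a c + Y n b c"
  by (fact va[unfolded vertex_algebra_def, THEN conjunct1, rule_format])

lemma va_add2: "Y n a (b + c) = Y n a b + Y n a c"
  by (fact va[unfolded vertex_algebra_def, THEN conjunct2, THEN conjunct2, THEN conjunct1, rule_format])

lemma va_smult2: "Y n a (V_smult k c) = V_smult k (Y n a c)"
  by (fact va[unfolded vertex_algebra_def, THEN conjunct2, THEN conjunct2, THEN conjunct2, THEN conjunct1, rule_format])

lemma va_zero2 [simp]: "Y n a 0 = 0"
  using va_add2[of n a 0 0] by simp

lemma va_trans: "V_T (Y n a b) - Y n a (V_T b) = V_smult (- of_int n) (Y (n - 1) a b)"
  by (fact va[unfolded vertex_algebra_def, THEN conjunct2, THEN conjunct2, THEN conjunct2, THEN conjunct2, THEN conjunct2, THEN conjunct2, THEN conjunct2, THEN conjunct2, THEN conjunct2, THEN conjunct1, rule_format])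

lemma va_trans': "Y n a (V_T b) = V_T (Y n a b) - V_smult (- of_int n) (Y (n - 1) a b)"
  using va_trans[of n a b] by (simp add: algebra_simps)

lemma va_vac1: "Y n V_vac a = (if n = -1 then a else 0)"
  by (fact va[unfolded vertex_algebra_def, THEN conjunct2, THEN conjunct2, THEN conjunct2, THEN conjunct2, THEN conjunct2, THEN conjunct2, THEN conjunct1, rule_format])

lemma va_vac2: "n \<ge> 0 \<Longrightarrow> Y n a V_vac = 0"
  by (simp add: va[unfolded vertex_algebra_def, THEN conjunct2, THEN conjunct2, THEN conjunct2, THEN conjunct2, THEN conjunct2, THEN conjunct2, THEN conjunct2, THEN conjunct1, rule_format])

lemma va_vac3: "Y (-1) a V_vac = a"
  by (fact va[unfolded vertex_algebra_def, THEN conjunct2, THEN conjunct2, THEN conjunct2, THEN conjunct2, THEN conjunct2, THEN conjunct2, THEN conjunct2, THEN conjunct2, THEN conjunct1, rule_format])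

lemma va_Tvac: "V_T V_vac = 0"
  by (fact va[unfolded vertex_algebra_def, THEN conjunct2, THEN conjunct2, THEN conjunct2, THEN conjunct2, THEN conjunct2, THEN conjunct1, rule_format])

lemma va_loc: "\<exists>N. \<forall>m n c. Ssum V_smult N (\<lambda>m n. Y m a (Y n b c) - Y n b (Y m a c)) m n = 0"
  using va[unfolded vertex_algebra_def, THEN conjunct2, THEN conjunct2, THEN conjunct2, THEN conjunct2, THEN conjunct2, THEN conjunct2, THEN conjunct2, THEN conjunct2, THEN conjunct2, THEN conjunct2] unfolding Ssum_def by blast

lemma va_F1: "Y (- int k - 1) x V_vac = V_smult (1 / fact k) ((V_T ^^ k) x)"
proof (induction k)
  case 0 then show ?case using va_vac3 by simp
next
  case (Suc k)
  have e: "- int k - 1 - 1 = - int (Suc k) - 1" by simp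
  have "V_T (Y (- int k - 1) x V_vac) - Y (- int k - 1) x (V_T V_vac)
      = V_smult (- of_int (- int k - 1)) (Y (- int (Suc k) - 1) x V_vac)"
    using va_trans[of "- int k - 1" x V_vac] by (simp only: e)
  then have h: "V_smult (of_nat (Suc k)) (Y (- int (Suc k) - 1) x V_vac) = V_smult (1 / fact k) ((V_T ^^ Suc k) x)"
    by (simp add: va_Tvac Suc.IH V_T_smult)
  have "Y (- int (Suc k) - 1) x V_vac = V_smult (1 / of_nat (Suc k)) (V_smult (of_nat (Suc k)) (Y (- int (Suc k) - 1) x V_vac))"
    by (simp add: V_smult_mult del: of_nat_Suc)
  also have "\<dots> = V_smult (1 / fact (Suc k)) ((V_T ^^ Suc k) x)"
    by (simp only: h V_smult_mult) (simp add: fact_Suc del: of_nat_Suc)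
  finally show ?case .
qed

lemma va_vac_N: "fst (Y m (0, p) V_vac) = 0"
proof (cases "m \<ge> 0")
  case True then show ?thesis by (simp add: va_vac2)
next
  case False
  then obtain k where m: "m = - int k - 1" using neg_int_cases by (metis not_le)
  show ?thesis by (simp add: m va_F1 V_smult_def fst_VT_pow)
qed

lemma va_star:
  "\<exists>N0. \<forall>N\<ge>N0. \<forall>M. Y M x y = (\<Sum>j\<in>{0..N}. V_smult ((-1) ^ j * of_nat (N choose j))
        (Y (-1 + int j) y (Y (M - int j) x V_vac)))"
proof -
  obtain N0 where N0: "\<forall>m n c. Ssum V_smult N0 (\<lambda>m n. Y m x (Y n y c) - Y n y (Y m x c)) m n = 0"
    using va_loc by blast
  have "Y M x y = (\<Sum>j\<in>{0..N}. V_smult ((-1) ^ j * of_nat (N choose j))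
        (Y (-1 + int j) y (Y (M - int j) x V_vac)))" if N: "N \<ge> N0" for N M
  proof -
    have L: "\<forall>m n. Ssum V_smult N (\<lambda>m n. Y m x (Y n y c) - Y n y (Y m x c)) m n = 0" for c
    proof -
      have "\<forall>m n. Ssum V_smult N0 (\<lambda>m n. Y m x (Y n y c) - Y n y (Y m x c)) m n = 0"
        using N0 by blast
      then show ?thesis by (rule Ssum_mono[OF V_smult_add_left _ N])
    qed
    define s where "s j = ((-1) ^ j * of_nat (N choose j) :: complex)" for j
    define f1 where "f1 j = V_smult (s j) (Y (M - int j) x (Y (-1 + int j) y V_vac))" for j
    define f2 where "f2 j = V_smult (s j) (Y (-1 + int j) y (Y (M - int j) x V_vac))" for j
    have "0 = Ssum V_smult N (\<lambda>m n. Y m x (Y n y V_vac) - Y n y (Y m x V_vac)) (M - int N) (-1)"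
      using L[of V_vac] by simp
    also have "\<dots> = (\<Sum>j\<in>{0..N}. f1 j - f2 j)"
      by (simp add: Ssum_def f1_def f2_def s_def V_smult_diff)
    also have "\<dots> = sum f1 {0..N} - sum f2 {0..N}"
      by (simp add: sum_subtractf)
    also have "sum f1 {0..N} = f1 0 + sum f1 {Suc 0..N}"
      by (rule sum.atLeast_Suc_atMost) simp
    also have "sum f1 {Suc 0..N} = 0"
    proof (rule sum.neutral, intro ballI)
      fix j assume "j \<in> {Suc 0..N}"
      then have "-1 + int j \<ge> 0" by simp
      then show "f1 j = 0" by (simp add: f1_def va_vac2)
    qed
    also have "f1 0 = Y M x y"
      by (simp add: f1_def s_def va_vac3)
    finally show ?thesis by (simp add: f2_def s_def)
  qed
  then show ?thesis by blast
qed

end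

section \<open>Uniqueness\<close>

lemma SA:
  assumes va: "vertex_algebra V_smult V_vac V_T Y" and va': "vertex_algebra V_smult V_vac V_T Y'"
    and h: "\<forall>m. Y m a V_n = Y' m a V_n"
  shows "Y m a (0, q) = Y' m a (0, q)"
proof (induction q arbitrary: m)
  case 0
  have "(0::complex fls, 0::complex poly) = 0" by (simp add: zero_prod_def)
  then show ?case using va_zero2[OF va] va_zero2[OF va'] by metis
next
  case (pCons c q)
  show ?case
    unfolding V_n_split
    by (simp only: va_add2[OF va] va_add2[OF va'] va_smult2[OF va] va_smult2[OF va']
        va_trans'[OF va] va_trans'[OF va'] h pCons.IH)
qed

lemma star_eq:
  assumes va: "vertex_algebra V_smult V_vac V_T Y" and va': "vertex_algebra V_smult V_vac V_T Y'"
    and h: "\<And>k r. Y k y (0, r) = Y' k y (0, r)"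
  shows "Y M (0, p) y = Y' M (0, p) y"
proof -
  obtain N1 where N1: "\<forall>N\<ge>N1. \<forall>M. Y M (0, p) y = (\<Sum>j\<in>{0..N}. V_smult ((-1) ^ j * of_nat (N choose j))
        (Y (-1 + int j) y (Y (M - int j) (0, p) V_vac)))"
    using va_star[OF va] by blast
  obtain N2 where N2: "\<forall>N\<ge>N2. \<forall>M. Y' M (0, p) y = (\<Sum>j\<in>{0..N}. V_smult ((-1) ^ j * of_nat (N choose j))
        (Y' (-1 + int j) y (Y' (M - int j) (0, p) V_vac)))"
    using va_star[OF va'] by blast
  define N where "N = max N1 N2"
  have vs: "Y k (0, p) V_vac = Y' k (0, p) V_vac" for k
  proof (cases "k \<ge> 0")
    case True then show ?thesis by (simp add: va_vac2[OF va] va_vac2[OF va'])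
  next
    case False
    then obtain r where m: "k = - int r - 1" using neg_int_cases by (metis not_le)
    show ?thesis by (simp add: m va_F1[OF va] va_F1[OF va'])
  qed
  have t: "Y (-1 + int j) y (Y (M - int j) (0, p) V_vac) = Y' (-1 + int j) y (Y' (M - int j) (0, p) V_vac)" for j
  proof -
    define z where "z = Y (M - int j) (0, p) V_vac"
    have "z = (0, snd z)" using va_vac_N[OF va, of "M - int j" p] by (simp add: z_def prod_eq_iff)
    then have "Y (-1 + int j) y z = Y' (-1 + int j) y z" using h by metis
    then show ?thesis by (simp add: z_def vs)
  qed
  have e1: "Y M (0, p) y = (\<Sum>j\<in>{0..N}. V_smult ((-1) ^ j * of_nat (N choose j))
        (Y (-1 + int j) y (Y (M - int j) (0, p) V_vac)))" using N1 by (simp add: N_def)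
  have e2: "Y' M (0, p) y = (\<Sum>j\<in>{0..N}. V_smult ((-1) ^ j * of_nat (N choose j))
        (Y' (-1 + int j) y (Y' (M - int j) (0, p) V_vac)))" using N2 by (simp add: N_def)
  show ?thesis unfolding e1 e2 t ..
qed

theorem uniqueness:
  assumes s: "V_structure Y" and s': "V_structure Y'"
  shows "Y = Y'"
proof (intro ext)
  fix m :: int and x y :: V
  have va: "vertex_algebra V_smult V_vac V_T Y" and va': "vertex_algebra V_smult V_vac V_T Y'"
    using s s' by (simp_all add: V_structure_def)
  have U: "Y k (a, 0) (b, 0) = Y' k (a, 0) (b, 0)" for k a b
    using s s' by (simp add: V_structure_def)
  have UN: "Y k (a, 0) V_n = Y' k (a, 0) V_n" for k a
    using s s' by (simp add: V_structure_def)
  have NN: "Y k V_n V_n = Y' k V_n V_n" for k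
    using s s' by (simp add: V_structure_def)
  have U2: "Y k (a, 0) (0, r) = Y' k (a, 0) (0, r)" for k a r
    using SA[OF va va'] UN by blast
  have N2: "Y k V_n (0, r) = Y' k V_n (0, r)" for k r
    using SA[OF va va'] NN by blast
  have N1: "Y k (0, p) V_n = Y' k (0, p) V_n" for k p
    using star_eq[OF va va' N2] by (simp add: V_n_def)
  have N3: "Y k (0, p) (0, r) = Y' k (0, p) (0, r)" for k p r
    using SA[OF va va'] N1 by blast
  have N4: "Y k (0, p) (b, 0) = Y' k (0, p) (b, 0)" for k p b
    using star_eq[OF va va' U2] by blast
  obtain u p where x: "x = (u, p)" by fastforce
  obtain v q where y: "y = (v, q)" by fastforce
  have sx: "x = (u, 0) + (0, p)" and sy: "y = (v, 0) + (0, q)" by (simp_all add: x y)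
  show "Y m x y = Y' m x y"
    unfolding sx sy
    by (simp only: va_add1[OF va] va_add1[OF va'] va_add2[OF va] va_add2[OF va'] U U2 N3 N4)
qed

section \<open>Central series\<close>

abbreviation NN :: "V set" where "NN \<equiv> range (\<lambda>p. (0, p))"

lemma Y0_V_n: "Y0 0 (fls_X_inv, 0) V_n = V_n"
  by (simp only: Y0_UN) (simp add: V_n_def one_pCons)

lemma cb:
  assumes "V_n \<in> BB" and "\<And>j a b. j \<ge> 0 \<Longrightarrow> b \<in> BB \<Longrightarrow> Y0 j a b \<in> NN"
  shows "conf_bracket V_smult V_T Y0 UNIV BB = NN"
proof
  define G where "G = {Y0 j a b | j a b. j \<ge> 0 \<and> a \<in> (UNIV::V set) \<and> b \<in> BB}"
  have cbG: "conf_bracket V_smult V_T Y0 UNIV BB = cd_span V_smult V_T G"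
    by (simp add: conf_bracket_def G_def)
  show "conf_bracket V_smult V_T Y0 UNIV BB \<subseteq> NN"
    unfolding cbG cd_span_def
  proof (rule Inter_lower, safe)
    fix x assume "x \<in> G" then show "x \<in> NN" using assms(2) by (auto simp: G_def)
  next
    show "0 \<in> NN" by (simp add: zero_prod_def)
  next
    fix x y show "(0, x) + (0, y) \<in> NN" by simp
  next
    fix k x show "V_smult k (0, x) \<in> NN" by (simp add: V_smult_def)
  next
    fix x show "V_T (0, x) \<in> NN" by (simp add: V_T_def)
  qed
  show "NN \<subseteq> conf_bracket V_smult V_T Y0 UNIV BB"
    unfolding cbG cd_span_def
  proof (intro subsetI InterI)
    fix x M assume x: "x \<in> NN" and "M \<in> {M. G \<subseteq> M \<and> 0 \<in> M \<and> (\<forall>x\<in>M. \<forall>y\<in>M. x + y \<in> M)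
       \<and> (\<forall>k. \<forall>x\<in>M. V_smult k x \<in> M) \<and> (\<forall>x\<in>M. V_T x \<in> M)}"
    then have M: "G \<subseteq> M" "0 \<in> M" "\<forall>x\<in>M. \<forall>y\<in>M. x + y \<in> M"
      "\<forall>k. \<forall>x\<in>M. V_smult k x \<in> M" "\<forall>x\<in>M. V_T x \<in> M" by auto
    have "V_n \<in> G" unfolding G_def using assms(1) Y0_V_n
      by (metis (mono_tags, lifting) UNIV_I mem_Collect_eq order_refl)
    then have vn: "V_n \<in> M" using M by blast
    have "(0, q) \<in> M" for q
    proof (induction q)
      case 0 then show ?case using M by (simp add: zero_prod_def)
    next
      case (pCons c q) then show ?case using M vn unfolding V_n_split by blast
    qed
    then show "x \<in> M" using x by blast
  qed
qed

lemma central_Y0: "k \<ge> 1 \<Longrightarrow> central_series V_smult V_T Y0 k = NN"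
proof (induction k rule: dec_induct)
  case base
  have "central_series V_smult V_T Y0 1 = conf_bracket V_smult V_T Y0 UNIV UNIV" by simp
  also have "\<dots> = NN" by (rule cb) (auto simp: Y0_def intro: rangeI)
  finally show ?case .
next
  case (step k)
  have "central_series V_smult V_T Y0 (Suc k) = conf_bracket V_smult V_T Y0 UNIV NN"
    using step.IH by simp
  also have "\<dots> = NN" by (rule cb) (auto simp: Y0_def V_n_def intro: rangeI)
  finally show ?case .
qed

theorem theorem5p5:
  shows "(\<exists>!Y. V_structure Y)
       \<and> (\<forall>Y. V_structure Y
          \<longrightarrow> (\<exists>K. \<forall>k\<ge>K. central_series V_smult V_T Y k = range (\<lambda>p. (0, p))))"
proof
  show "\<exists>!Y. V_structure Y" using Y0_structure uniqueness by blast
  show "\<forall>Y. V_structure Y \<longrightarrow> (\<exists>K. \<forall>k\<ge>K. central_series V_smult V_T Y k = range (\<lambda>p. (0, p)))"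
  proof (intro allI impI)
    fix Y assume "V_structure Y"
    then have "Y = Y0" using Y0_structure uniqueness by blast
    then show "\<exists>K. \<forall>k\<ge>K. central_series V_smult V_T Y k = range (\<lambda>p. (0, p))"
      using central_Y0 by blast
  qed
qed


end
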